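(* Let $D\subset\mathbb{C}^n$ be a hyperconvex domain, $\mathscr{P}$ a priori data on $D$ with poles $\mathbf{Z}=\{\mathbf{z}_1,\dots,\mathbf{z}_p\}$, and $\Phi^D_{\mathscr{P},\max}$ a global Zhou weight related to $\mathscr{P}$ on $D$. Then for every $\psi\in\mathrm{PSH}^-(D)$, the inequality $\psi\le\sigma_{\mathbf{Z}}\big(\psi,\Phi^D_{\mathscr{P},\max}\big)\Phi^D_{\mathscr{P},\max}$ holds on $D$.
   Context: $\mathrm{PSH}^-(D)$: negative plurisubharmonic functions on $D$. Hyperconvex: admits a continuous plurisubharmonic exhaustion $\varrho:D\to(-\infty,0)$. A priori data $\mathscr{P}=\big(\{\mathbf{z}_i\},\{\mathbf{f}_{0,i}\},\{u_{0,i}\}\big)$: distinct $\mathbf{z}_1,\dots,\mathbf{z}_p\in D$, holomorphic vectors $\mathbf{f}_{0,i}$ near $\mathbf{z}_i$ ($|\mathbf f|^2=\sum_j|f_j|^2$), plurisubharmonic $u_{0,i}$ near $\mathbf{z}_i$ with $|\mathbf{f}_{0,i}|^2e^{-2u_{0,i}}$ integrable near $\mathbf{z}_i$. Global Zhou weight related to $\mathscr{P}$ on $D$: $\Phi\in\mathrm{PSH}^-(D)$ such that (1) for large $N_i$, $|\mathbf{f}_{0,i}|^2e^{-2u_{0,i}}|z-\mathbf{z}_i|^{2N_i}e^{-2\Phi}$ is integrable near $\mathbf{z}_i$ for all $i$; (2) $|\mathbf{f}_{0,i}|^2e^{-2u_{0,i}-2\Phi}$ is not integrable near $\mathbf{z}_i$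 for all $i$; (3) any $\Psi\in\mathrm{PSH}^-(D)$ with $\Psi\ge\Phi$ and $|\mathbf{f}_{0,i}|^2e^{-2u_{0,i}-2\Psi}$ non-integrable near every $\mathbf{z}_i$ equals $\Phi$ on $D$. For plurisubharmonic $\psi$, $\sigma_{\mathbf{z}_i}(\psi,\Phi)=\sup\{c\ge0:\psi\le c\Phi+O(1)\text{ near }\mathbf{z}_i\}$ and $\sigma_{\mathbf{Z}}(\psi,\Phi)=\min_{1\le i\le p}\sigma_{\mathbf{z}_i}(\psi,\Phi)$. *)

theory Defs
  imports "HOL-Analysis.Analysis"
begin

text \<open>Points of C^n are vectors of type complex^'n (n = CARD('n)).
  Plurisubharmonic functions take values in ereal (value minus infinity allowed).\<close>

definition eexp :: "ereal \<Rightarrow> ennreal" where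
  "eexp t = (case t of ereal r \<Rightarrow> ennreal (exp r) | PInfty \<Rightarrow> \<infinity> | MInfty \<Rightarrow> 0)"

definition circle_mean ::
  "(complex^'n \<Rightarrow> ereal) \<Rightarrow> complex^'n \<Rightarrow> complex^'n \<Rightarrow> real \<Rightarrow> ereal" where
  "circle_mean u a b r =
     ereal (1 / (2 * pi)) *
      (enn2ereal (\<integral>\<^sup>+ \<theta> \<in> {0..2*pi}. e2ennreal (u (a + (of_real r * cis \<theta>) *s b)) \<partial>lborel)
     - enn2ereal (\<integral>\<^sup>+ \<theta> \<in> {0..2*pi}. e2ennreal (- u (a + (of_real r * cis \<theta>) *s b)) \<partial>lborel))"

definition psh_on :: "(complex^'n) set \<Rightarrow> (complex^'n \<Rightarrow> ereal) \<Rightarrow> bool" where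
  "psh_on U u \<longleftrightarrow>
     (\<forall>x\<in>U. u x < \<infinity>) \<and>
     (\<forall>x\<in>U. \<forall>t. u x < t \<longrightarrow> (\<forall>\<^sub>F y in at x within U. u y < t)) \<and>
     (\<forall>a\<in>U. \<forall>b r. r > 0 \<and> (\<forall>\<zeta>. cmod \<zeta> \<le> r \<longrightarrow> a + \<zeta> *s b \<in> U)
         \<longrightarrow> u a \<le> circle_mean u a b r)"

definition psh_neg :: "(complex^'n) set \<Rightarrow> (complex^'n \<Rightarrow> ereal) \<Rightarrow> bool" where
  "psh_neg D u \<longleftrightarrow> psh_on D u \<and> (\<forall>x\<in>D. u x \<le> 0)"

definition holo_on :: "(complex^'n) set \<Rightarrow> (complex^'n \<Rightarrow> complex^'m) \<Rightarrow> bool" where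
  "holo_on U F \<longleftrightarrow> (\<forall>x\<in>U. \<exists>L. (F has_derivative L) (at x) \<and> (\<forall>c v. L (c *s v) = c *s L v))"

definition hyperconvex :: "(complex^'n) set \<Rightarrow> bool" where
  "hyperconvex D \<longleftrightarrow> open D \<and> connected D \<and> D \<noteq> {} \<and>
     (\<exists>\<rho> :: complex^'n \<Rightarrow> real. continuous_on D \<rho> \<and> psh_on D (\<lambda>x. ereal (\<rho> x)) \<and>
        (\<forall>x\<in>D. \<rho> x < 0) \<and>
        (\<forall>c<0. compact (closure {x\<in>D. \<rho> x < c}) \<and> closure {x\<in>D. \<rho> x < c} \<subseteq> D))"

definition loc_integrable_at :: "complex^'n \<Rightarrow> (complex^'n \<Rightarrow> ennreal) \<Rightarrow> bool" where
  "loc_integrable_at z g \<longleftrightarrow> (\<exists>r>0. (\<integral>\<^sup>+ x \<in> ball z r. g x \<partial>lborel) < \<infinity>)"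

text \<open>A priori data: poles z 0..z (p-1), vectors f i, weights u i.\<close>
definition apriori_data ::
  "(complex^'n) set \<Rightarrow> nat \<Rightarrow> (nat \<Rightarrow> complex^'n) \<Rightarrow> (nat \<Rightarrow> complex^'n \<Rightarrow> complex^'m)
     \<Rightarrow> (nat \<Rightarrow> complex^'n \<Rightarrow> ereal) \<Rightarrow> bool" where
  "apriori_data D p z f u \<longleftrightarrow> 0 < p \<and> inj_on z {..<p} \<and> (\<forall>i<p. z i \<in> D) \<and>
     (\<forall>i<p. \<exists>r>0. ball (z i) r \<subseteq> D \<and> holo_on (ball (z i) r) (f i) \<and> psh_on (ball (z i) r) (u i)) \<and>
     (\<forall>i<p. loc_integrable_at (z i) (\<lambda>x. ennreal ((norm (f i x))\<^sup>2) * eexp (- 2 * u i x)))"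

definition global_zhou_weight ::
  "(complex^'n) set \<Rightarrow> nat \<Rightarrow> (nat \<Rightarrow> complex^'n) \<Rightarrow> (nat \<Rightarrow> complex^'n \<Rightarrow> complex^'m)
     \<Rightarrow> (nat \<Rightarrow> complex^'n \<Rightarrow> ereal) \<Rightarrow> (complex^'n \<Rightarrow> ereal) \<Rightarrow> bool" where
  "global_zhou_weight D p z f u \<Phi> \<longleftrightarrow> psh_neg D \<Phi> \<and>
     (\<forall>i<p. \<exists>N0. \<forall>N\<ge>N0. loc_integrable_at (z i)
        (\<lambda>x. ennreal ((norm (f i x))\<^sup>2) * eexp (- 2 * u i x) * ennreal (norm (x - z i) ^ (2 * N))
             * eexp (- 2 * \<Phi> x))) \<and>
     (\<forall>i<p. \<not> loc_integrable_at (z i)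
        (\<lambda>x. ennreal ((norm (f i x))\<^sup>2) * eexp (- 2 * u i x) * eexp (- 2 * \<Phi> x))) \<and>
     (\<forall>\<Psi>. psh_neg D \<Psi> \<and> (\<forall>x\<in>D. \<Phi> x \<le> \<Psi> x) \<and>
        (\<forall>i<p. \<not> loc_integrable_at (z i)
           (\<lambda>x. ennreal ((norm (f i x))\<^sup>2) * eexp (- 2 * u i x) * eexp (- 2 * \<Psi> x)))
        \<longrightarrow> (\<forall>x\<in>D. \<Psi> x = \<Phi> x))"

definition rel_type :: "complex^'n \<Rightarrow> (complex^'n \<Rightarrow> ereal) \<Rightarrow> (complex^'n \<Rightarrow> ereal) \<Rightarrow> ereal" where
  "rel_type z \<psi> \<Phi> = Sup {ereal c | c. c \<ge> 0 \<and>
      (\<exists>r>0. \<exists>C::real. \<forall>x\<in>ball z r. \<psi> x \<le> ereal c * \<Phi> x + ereal C)}"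

definition rel_type_set :: "nat \<Rightarrow> (nat \<Rightarrow> complex^'n) \<Rightarrow> (complex^'n \<Rightarrow> ereal) \<Rightarrow> (complex^'n \<Rightarrow> ereal) \<Rightarrow> ereal" where
  "rel_type_set p z \<psi> \<Phi> = Min ((\<lambda>i. rel_type (z i) \<psi> \<Phi>) ` {..<p})"

end

theory Submission
  imports Defs
begin

lemma nn_cmult_le: "c * integral\<^sup>N M f \<le> integral\<^sup>N M (\<lambda>x. c * f x)"
proof -
  have "c * integral\<^sup>N M f = (SUP g \<in> {g. simple_function M g \<and> g \<le> f}. c * integral\<^sup>S M g)"
    unfolding nn_integral_def by (rule SUP_mult_left_ennreal)
  also have "\<dots> \<le> integral\<^sup>N M (\<lambda>x. c * f x)"
  proof (rule SUP_least)
    fix g assume g: "g \<in> {g. simple_function M g \<and> g \<le> f}"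
    then have s: "simple_function M (\<lambda>x. c * g x)" by (auto intro: simple_function_compose1)
    have le: "(\<lambda>x. c * g x) \<le> (\<lambda>x. c * f x)" using g by (auto simp: le_fun_def intro: mult_left_mono)
    have "c * integral\<^sup>S M g = integral\<^sup>S M (\<lambda>x. c * g x)" using g by simp
    also have "\<dots> \<le> integral\<^sup>N M (\<lambda>x. c * f x)"
      unfolding nn_integral_def using s le by (intro SUP_upper) auto
    finally show "c * integral\<^sup>S M g \<le> integral\<^sup>N M (\<lambda>x. c * f x)" .
  qed
  finally show ?thesis .
qed

lemma nn_cmult_eq:
  assumes "(k::real) > 0"
  shows "integral\<^sup>N M (\<lambda>x. ennreal k * f x) = ennreal k * integral\<^sup>N M f"
proof (rule antisym)
  have inv: "ennreal (1/k) * ennreal k = 1" using assms by (simp add: ennreal_mult'[symmetric])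
  have "ennreal (1/k) * integral\<^sup>N M (\<lambda>x. ennreal k * f x) \<le> integral\<^sup>N M (\<lambda>x. ennreal (1/k) * (ennreal k * f x))"
    by (rule nn_cmult_le)
  also have "\<dots> = integral\<^sup>N M f" by (simp add: mult.assoc[symmetric] inv)
  finally have h: "ennreal (1/k) * integral\<^sup>N M (\<lambda>x. ennreal k * f x) \<le> integral\<^sup>N M f" .
  have "integral\<^sup>N M (\<lambda>x. ennreal k * f x) = ennreal k * (ennreal (1/k) * integral\<^sup>N M (\<lambda>x. ennreal k * f x))"
    by (simp add: mult.assoc[symmetric] inv mult.commute[of "ennreal k"])
  also have "\<dots> \<le> ennreal k * integral\<^sup>N M f" using h by (rule mult_left_mono) simp
  finally show "integral\<^sup>N M (\<lambda>x. ennreal k * f x) \<le> ennreal k * integral\<^sup>N M f" .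
qed (rule nn_cmult_le)

lemma e2_scale:
  assumes "(k::real) > 0"
  shows "e2ennreal (ereal k * v) = ennreal k * e2ennreal v"
  using assms
  by (cases v) (auto simp: ennreal_mult' e2ennreal_neg ennreal_neg ennreal_mult_top)

lemma enn2_scale:
  assumes "(k::real) > 0"
  shows "enn2ereal (ennreal k * X) = ereal k * enn2ereal X"
  using assms by (simp add: times_ennreal.rep_eq)

lemma diff_scale:
  assumes "(k::real) > 0" "A \<ge> 0" "B \<ge> 0"
  shows "ereal k * A - ereal k * B = ereal k * (A - B)"
  using assms by (cases A; cases B) (auto simp: algebra_simps)


lemma neg_scale: "- (ereal k * v) = ereal k * (- v)"
  by (cases v) auto

lemma cm_scale:
  assumes "(k::real) > 0"
  shows "circle_mean (\<lambda>x. ereal k * u x) a b r = ereal k * circle_mean u a b r"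
proof -
  let ?P = "\<lambda>w. (\<integral>\<^sup>+ \<theta> \<in> {0..2*pi}. e2ennreal (w (a + (of_real r * cis \<theta>) *s b)) \<partial>lborel)"
  have P: "?P (\<lambda>x. ereal k * w x) = ennreal k * ?P w" for w :: "complex^'a \<Rightarrow> ereal"
  proof -
    have "?P (\<lambda>x. ereal k * w x) = (\<integral>\<^sup>+ \<theta>. ennreal k * (e2ennreal (w (a + (of_real r * cis \<theta>) *s b)) * indicator {0..2*pi} \<theta>) \<partial>lborel)"
      using assms by (simp add: e2_scale mult.assoc)
    also have "\<dots> = ennreal k * ?P w" using assms by (rule nn_cmult_eq)
    finally show ?thesis .
  qed
  have P2: "?P (\<lambda>x. - (ereal k * u x)) = ennreal k * ?P (\<lambda>x. - u x)"
    unfolding neg_scale by (rule P)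
  show ?thesis
    unfolding circle_mean_def
    apply (subst P[of u])
    apply (subst P2)
    apply (subst enn2_scale[OF assms])+
    apply (subst diff_scale[OF assms])
      apply simp apply simp
    by (simp add: mult.left_commute)
qed

lemma enn2ereal_mono: "x \<le> y \<Longrightarrow> enn2ereal x \<le> enn2ereal y"
  by (simp add: less_eq_ennreal.rep_eq)

lemma cm_mono:
  assumes "\<And>x. u x \<le> v x"
  shows "circle_mean u a b r \<le> circle_mean v a b r"
  unfolding circle_mean_def
  apply (rule ereal_mult_left_mono)
   apply (rule ereal_minus_mono)
    apply (rule enn2ereal_mono)
    apply (rule nn_integral_mono)
    apply (rule mult_right_mono)
     apply (rule e2ennreal_mono, rule assms, simp)
    apply (rule enn2ereal_mono)
    apply (rule nn_integral_mono)
    apply (rule mult_right_mono)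
    apply (rule e2ennreal_mono) using assms apply simp
   apply simp
  apply simp
  done


lemma scal_less: assumes "(c::real) > 0"
  shows "(ereal (1/c) * a < t) \<longleftrightarrow> (a < ereal c * t)"
  using assms by (cases a; cases t) (auto simp: field_simps)

lemma scal_le: assumes "(c::real) > 0"
  shows "(ereal (1/c) * a \<le> t) \<longleftrightarrow> (a \<le> ereal c * t)"
  using assms by (cases a; cases t) (auto simp: field_simps)

lemma mult_nonpos_anti: assumes "(c::real) \<le> c'" "0 \<le> c" "(v::ereal) \<le> 0"
  shows "ereal c' * v \<le> ereal c * v"
  using assms by (cases v) (auto simp: mult_right_mono_neg)

lemma shift_bound: assumes "(c::real) > 0" "a \<le> ereal c * v + ereal C"
  shows "ereal (1/c) * a \<le> v + ereal (C / c)"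
  using assms by (cases a; cases v) (auto simp: field_simps)

lemma eexp_bound:
  assumes "(Psi::ereal) \<le> Phi + ereal C"
  shows "eexp (- 2 * Phi) \<le> ennreal (exp (2*C)) * eexp (- 2 * Psi)"
proof (cases Phi)
  case (real phi)
  show ?thesis
  proof (cases Psi)
    case (real s)
    with assms \<open>Phi = ereal phi\<close> have "s \<le> phi + C" by simp
    then have "exp (- 2 * phi) \<le> exp (2 * C) * exp (- 2 * s)"
      by (simp add: exp_add[symmetric])
    then show ?thesis using real \<open>Phi = ereal phi\<close>
      by (simp add: eexp_def ennreal_mult'[symmetric] ennreal_leI)
  next
    case PInf with assms real show ?thesis by simp
  next
    case MInf then show ?thesis by (simp add: eexp_def ennreal_mult_top)
  qed
next
  case PInf then show ?thesis by (simp add: eexp_def)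
next
  case MInf
  with assms have "Psi = -\<infinity>" by simp
  then show ?thesis using MInf by (simp add: eexp_def ennreal_mult_top)
qed

lemma final_step:
  fixes sigma phi psi :: ereal
  assumes "sigma \<ge> 0" "phi \<le> 0" "psi \<le> 0"
    and H: "\<And>c. c > 0 \<Longrightarrow> ereal c < sigma \<Longrightarrow> psi \<le> ereal c * phi"
  shows "psi \<le> sigma * phi"
proof (cases sigma)
  case (real s)
  show ?thesis
  proof (cases "s = 0")
    case True then show ?thesis using real assms by (simp add: zero_ereal_def[symmetric])
  next
    case False
    with real assms have s: "s > 0" by simp
    show ?thesis
    proof (cases phi)
      case MInf
      have "psi \<le> ereal (s/2) * phi" using H[of "s/2"] s real by simp
      then show ?thesis using MInf s by simp
    next
      case PInf then show ?thesis using assms by simp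
    next
      case (real f)
      have f: "f \<le> 0" using assms real by simp
      show ?thesis
      proof (cases psi)
        case MInf then show ?thesis by simp
      next
        case PInf then show ?thesis using assms by simp
      next
        case (real y)
        show ?thesis
        proof (rule ccontr)
          assume "\<not> psi \<le> sigma * phi"
          then have ys: "y > s * f" using real \<open>phi = ereal f\<close> \<open>sigma = ereal s\<close> by simp
          then have f0: "f < 0" using f s
            by (cases "f = 0") (use assms real in auto)
          define c where "c = max (s/2) (s + (y - s*f)/(2*f))"
          have q: "(y - s*f)/(2*f) < 0" using ys f0 by (simp add: divide_pos_neg)
          have c0: "c > 0" "c < s" unfolding c_def using s q by auto
          have "y \<le> c * f" using H[of c] c0 \<open>sigma = ereal s\<close> real \<open>phi = ereal f\<close> by simp
          moreover have "c * f \<le> (s + (y - s*f)/(2*f)) * f"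
            unfolding c_def using f0 by (intro mult_right_mono_neg) auto
          moreover have "(s + (y - s*f)/(2*f)) * f = s*f + (y - s*f)/2"
            using f0 by (simp add: field_simps)
          ultimately have "y \<le> s * f + (y - s * f) / 2" by linarith
          then show False using ys by (simp add: field_simps)
        qed
      qed
    qed
  qed
next
  case PInf
  show ?thesis
  proof (cases "phi = 0")
    case True then show ?thesis using assms by simp
  next
    case False
    then have pn: "phi < 0" using assms by simp
    have "psi = -\<infinity>"
    proof (cases phi)
      case MInf then show ?thesis using H[of 1] PInf by simp
    next
      case PInf then show ?thesis using pn by simp
    next
      case (real f)
      with pn have f0: "f < 0" by simp
      show ?thesis
      proof (cases psi)
        case (real y)
        define c where "c = (\<bar>y\<bar> + 1) / (- f)"
        have c0: "c > 0" unfolding c_def using f0 by (simp add: divide_pos_neg add_pos_nonneg)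
        have "c * f = - (\<bar>y\<bar> + 1)" unfolding c_def using f0 by (simp add: field_simps)
        moreover have "y \<le> c * f" using H[of c] c0 PInf real \<open>phi = ereal f\<close> by simp
        ultimately show ?thesis by simp
      qed (use assms in auto)
    qed
    then show ?thesis by simp
  qed
next
  case MInf then show ?thesis using assms by simp
qed


theorem proposition1p9:
  fixes D :: "(complex^'n) set" and p :: nat and z :: "nat \<Rightarrow> complex^'n"
    and f :: "nat \<Rightarrow> complex^'n \<Rightarrow> complex^'m" and u :: "nat \<Rightarrow> complex^'n \<Rightarrow> ereal"
    and \<Phi> \<psi> :: "complex^'n \<Rightarrow> ereal"
  assumes "hyperconvex D"
    and "apriori_data D p z f u"
    and "global_zhou_weight D p z f u \<Phi>"
    and "psh_neg D \<psi>"
  shows "\<forall>x\<in>D. \<psi> x \<le> rel_type_set p z \<psi> \<Phi> * \<Phi> x"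
proof -
  have psiD: "psh_on D \<psi>" and psi0: "\<And>x. x \<in> D \<Longrightarrow> \<psi> x \<le> 0"
    using assms(4) by (auto simp: psh_neg_def)
  have Zw: "psh_neg D \<Phi>" using assms(3) by (simp add: global_zhou_weight_def)
  then have PhiD: "psh_on D \<Phi>" and Phi0: "\<And>x. x \<in> D \<Longrightarrow> \<Phi> x \<le> 0"
    by (auto simp: psh_neg_def)
  have nonint: "\<And>i. i < p \<Longrightarrow> \<not> loc_integrable_at (z i)
        (\<lambda>x. ennreal ((norm (f i x))\<^sup>2) * eexp (- 2 * u i x) * eexp (- 2 * \<Phi> x))"
    using assms(3) by (simp add: global_zhou_weight_def)
  have maxi: "\<And>\<Psi>. psh_neg D \<Psi> \<Longrightarrow> (\<forall>x\<in>D. \<Phi> x \<le> \<Psi> x) \<Longrightarrow>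
        (\<forall>i<p. \<not> loc_integrable_at (z i)
           (\<lambda>x. ennreal ((norm (f i x))\<^sup>2) * eexp (- 2 * u i x) * eexp (- 2 * \<Psi> x)))
        \<Longrightarrow> (\<forall>x\<in>D. \<Psi> x = \<Phi> x)"
    using assms(3) unfolding global_zhou_weight_def by blast
  have p0: "p > 0" using assms(2) by (simp add: apriori_data_def)
  have balls: "\<And>i. i < p \<Longrightarrow> \<exists>r>0. ball (z i) r \<subseteq> D"
    using assms(2) unfolding apriori_data_def by blast
  define \<sigma> where "\<sigma> = rel_type_set p z \<psi> \<Phi>"
  have fin: "finite ((\<lambda>i. rel_type (z i) \<psi> \<Phi>) ` {..<p})" "(\<lambda>i. rel_type (z i) \<psi> \<Phi>) ` {..<p} \<noteq> {}"
    using p0 by auto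
  have sig0: "\<sigma> \<ge> 0"
    unfolding \<sigma>_def rel_type_set_def
  proof (subst Min_ge_iff[OF fin], intro ballI)
    fix y assume "y \<in> (\<lambda>i. rel_type (z i) \<psi> \<Phi>) ` {..<p}"
    then obtain i where i: "i < p" "y = rel_type (z i) \<psi> \<Phi>" by auto
    obtain r where r: "r > 0" "ball (z i) r \<subseteq> D" using balls[OF i(1)] by blast
    have "ereal 0 \<in> {ereal c | c. c \<ge> 0 \<and>
      (\<exists>r>0. \<exists>C::real. \<forall>x\<in>ball (z i) r. \<psi> x \<le> ereal c * \<Phi> x + ereal C)}"
    proof -
      have "\<forall>x\<in>ball (z i) r. \<psi> x \<le> ereal 0 * \<Phi> x + ereal 0"
        using r psi0 by (auto simp: zero_ereal_def[symmetric])
      then show ?thesis using r(1) by blast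
    qed
    then show "0 \<le> y" unfolding i(2) rel_type_def zero_ereal_def by (rule Sup_upper)
  qed
  have key: "\<forall>x\<in>D. \<psi> x \<le> ereal c * \<Phi> x" if c: "c > 0" "ereal c < \<sigma>" for c
  proof -
    have bnd: "\<exists>r>0. \<exists>C. \<forall>x\<in>ball (z i) r. \<psi> x \<le> ereal c * \<Phi> x + ereal C" if i: "i < p" for i
    proof -
      have "\<sigma> \<le> rel_type (z i) \<psi> \<Phi>" unfolding \<sigma>_def rel_type_set_def
        using fin i by (intro Min_le) auto
      with c have "ereal c < rel_type (z i) \<psi> \<Phi>" by simp
      then obtain c' r C where c': "ereal c < ereal c'" "r > 0"
          "\<forall>x\<in>ball (z i) r. \<psi> x \<le> ereal c' * \<Phi> x + ereal C"
        unfolding rel_type_def less_Sup_iff by blast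
      obtain r0 where r0: "r0 > 0" "ball (z i) r0 \<subseteq> D" using balls[OF i] by blast
      have "\<forall>x\<in>ball (z i) (min r r0). \<psi> x \<le> ereal c * \<Phi> x + ereal C"
      proof
        fix x assume x: "x \<in> ball (z i) (min r r0)"
        then have "x \<in> D" using r0 by auto
        have "\<psi> x \<le> ereal c' * \<Phi> x + ereal C" using c' x by auto
        also have "\<dots> \<le> ereal c * \<Phi> x + ereal C"
          using c c' Phi0[OF \<open>x \<in> D\<close>] by (intro add_right_mono mult_nonpos_anti) auto
        finally show "\<psi> x \<le> ereal c * \<Phi> x + ereal C" .
      qed
      then show ?thesis using c'(2) r0(1) by (intro exI[of _ "min r r0"]) auto
    qed
    define \<psi>' where "\<psi>' x = ereal (1/c) * \<psi> x" for x
    define \<Psi> where "\<Psi> x = max (\<Phi> x) (\<psi>' x)" for x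
    have psi'D: "psh_on D \<psi>'"
      unfolding psh_on_def
    proof (intro conjI ballI allI impI)
      fix x assume "x \<in> D"
      then have "\<psi> x < \<infinity>" using psiD by (simp add: psh_on_def)
      then show "\<psi>' x < \<infinity>" unfolding \<psi>'_def using c by (cases "\<psi> x") auto
    next
      fix x t assume x: "x \<in> D" and "\<psi>' x < t"
      then have "\<psi> x < ereal c * t" unfolding \<psi>'_def using scal_less[OF c(1)] by simp
      then have "\<forall>\<^sub>F y in at x within D. \<psi> y < ereal c * t" using psiD x by (simp add: psh_on_def)
      then show "\<forall>\<^sub>F y in at x within D. \<psi>' y < t"
        by (rule eventually_mono) (simp add: \<psi>'_def scal_less[OF c(1)])
    next
      fix a b r assume a: "a \<in> D" and h: "r > 0 \<and> (\<forall>\<zeta>. cmod \<zeta> \<le> r \<longrightarrow> a + \<zeta> *s b \<in> D)"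
      have "\<psi> a \<le> circle_mean \<psi> a b r" using psiD a h unfolding psh_on_def by blast
      then have "\<psi>' a \<le> ereal (1/c) * circle_mean \<psi> a b r"
        unfolding \<psi>'_def by (rule ereal_mult_left_mono) (use c in simp)
      also have "\<dots> = circle_mean \<psi>' a b r"
        unfolding \<psi>'_def using c by (subst cm_scale) auto
      finally show "\<psi>' a \<le> circle_mean \<psi>' a b r" .
    qed
    have PsiD: "psh_neg D \<Psi>"
      unfolding psh_neg_def psh_on_def
    proof (intro conjI ballI allI impI)
      fix x assume "x \<in> D"
      then show "\<Psi> x < \<infinity>" using psi'D PhiD unfolding \<Psi>_def psh_on_def by (auto simp: max_def)
    next
      fix x t assume x: "x \<in> D" and "\<Psi> x < t"
      then have "\<Phi> x < t" "\<psi>' x < t" unfolding \<Psi>_def by auto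
      then have "\<forall>\<^sub>F y in at x within D. \<Phi> y < t" "\<forall>\<^sub>F y in at x within D. \<psi>' y < t"
        using psi'D PhiD x unfolding psh_on_def by blast+
      then show "\<forall>\<^sub>F y in at x within D. \<Psi> y < t"
        unfolding \<Psi>_def by eventually_elim simp
    next
      fix a b r assume a: "a \<in> D" and h: "r > 0 \<and> (\<forall>\<zeta>. cmod \<zeta> \<le> r \<longrightarrow> a + \<zeta> *s b \<in> D)"
      have "\<Phi> a \<le> circle_mean \<Phi> a b r" using PhiD a h unfolding psh_on_def by blast
      also have "\<dots> \<le> circle_mean \<Psi> a b r" by (rule cm_mono) (simp add: \<Psi>_def)
      finally have 1: "\<Phi> a \<le> circle_mean \<Psi> a b r" .
      have "\<psi>' a \<le> circle_mean \<psi>' a b r" using psi'D a h unfolding psh_on_def by blast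
      also have "\<dots> \<le> circle_mean \<Psi> a b r" by (rule cm_mono) (simp add: \<Psi>_def)
      finally have 2: "\<psi>' a \<le> circle_mean \<Psi> a b r" .
      have "\<Psi> a = max (\<Phi> a) (\<psi>' a)" by (simp add: \<Psi>_def)
      then show "\<Psi> a \<le> circle_mean \<Psi> a b r" using 1 2 by simp
    next
      fix x assume x: "x \<in> D"
      have "\<psi>' x \<le> 0" unfolding \<psi>'_def using psi0[OF x] c
        by (cases "\<psi> x") (auto simp: divide_nonpos_pos)
      then show "\<Psi> x \<le> 0" using Phi0[OF x] unfolding \<Psi>_def by simp
    qed
    have ge: "\<forall>x\<in>D. \<Phi> x \<le> \<Psi> x" unfolding \<Psi>_def by simp
    have ni: "\<forall>i<p. \<not> loc_integrable_at (z i)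
           (\<lambda>x. ennreal ((norm (f i x))\<^sup>2) * eexp (- 2 * u i x) * eexp (- 2 * \<Psi> x))"
    proof (intro allI impI notI)
      fix i assume i: "i < p" and li: "loc_integrable_at (z i)
           (\<lambda>x. ennreal ((norm (f i x))\<^sup>2) * eexp (- 2 * u i x) * eexp (- 2 * \<Psi> x))"
      obtain r1 where r1: "r1 > 0" "(\<integral>\<^sup>+ x \<in> ball (z i) r1. ennreal ((norm (f i x))\<^sup>2) * eexp (- 2 * u i x) * eexp (- 2 * \<Psi> x) \<partial>lborel) < \<infinity>"
        using li unfolding loc_integrable_at_def by blast
      obtain r2 C where r2: "r2 > 0" "\<forall>x\<in>ball (z i) r2. \<psi> x \<le> ereal c * \<Phi> x + ereal C"
        using bnd[OF i] by blast
      define C' where "C' = max 0 (C / c)"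
      define K where "K = exp (2 * C')"
      have K: "K > 0" unfolding K_def by simp
      define \<rho> where "\<rho> = min r1 r2"
      let ?gP = "\<lambda>x. ennreal ((norm (f i x))\<^sup>2) * eexp (- 2 * u i x) * eexp (- 2 * \<Phi> x)"
      let ?gQ = "\<lambda>x. ennreal ((norm (f i x))\<^sup>2) * eexp (- 2 * u i x) * eexp (- 2 * \<Psi> x)"
      have pw: "?gP x * indicator (ball (z i) \<rho>) x \<le> ennreal K * (?gQ x * indicator (ball (z i) r1) x)" for x
      proof (cases "x \<in> ball (z i) \<rho>")
        case True
        then have x1: "x \<in> ball (z i) r1" and x2: "x \<in> ball (z i) r2" unfolding \<rho>_def by auto
        have "\<psi>' x \<le> \<Phi> x + ereal (C / c)"
          unfolding \<psi>'_def using shift_bound[OF c(1)] r2(2) x2 by blast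
        also have "\<dots> \<le> \<Phi> x + ereal C'" unfolding C'_def by (intro add_left_mono) simp
        finally have a1: "\<psi>' x \<le> \<Phi> x + ereal C'" .
        have "C' \<ge> 0" unfolding C'_def by simp
        then have a2: "\<Phi> x \<le> \<Phi> x + ereal C'" by (cases "\<Phi> x") auto
        have "\<Psi> x \<le> \<Phi> x + ereal C'"
          unfolding \<Psi>_def using a1 a2 by simp
        then have e: "eexp (- 2 * \<Phi> x) \<le> ennreal K * eexp (- 2 * \<Psi> x)"
          unfolding K_def by (rule eexp_bound)
        have "?gP x \<le> ennreal ((norm (f i x))\<^sup>2) * eexp (- 2 * u i x) * (ennreal K * eexp (- 2 * \<Psi> x))"
          using e by (intro mult_left_mono) auto
        then show ?thesis using True x1 by (simp add: ac_simps)
      qed simp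
      have "(\<integral>\<^sup>+ x \<in> ball (z i) \<rho>. ?gP x \<partial>lborel) \<le> (\<integral>\<^sup>+ x. ennreal K * (?gQ x * indicator (ball (z i) r1) x) \<partial>lborel)"
        by (rule nn_integral_mono) (rule pw)
      also have "\<dots> = ennreal K * (\<integral>\<^sup>+ x \<in> ball (z i) r1. ?gQ x \<partial>lborel)"
        using K by (rule nn_cmult_eq)
      also have "\<dots> < \<infinity>" using r1(2) by (simp add: ennreal_mult_less_top)
      finally have "loc_integrable_at (z i) ?gP"
        unfolding loc_integrable_at_def using r1(1) r2(1) \<rho>_def by (intro exI[of _ \<rho>]) auto
      then show False using nonint[OF i] by simp
    qed
    have eq: "\<forall>x\<in>D. \<Psi> x = \<Phi> x" using maxi[OF PsiD ge ni] .
    show ?thesis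
    proof
      fix x assume x: "x \<in> D"
      have "\<psi>' x \<le> \<Phi> x" using eq x unfolding \<Psi>_def by (metis max.cobounded2)
      then show "\<psi> x \<le> ereal c * \<Phi> x" unfolding \<psi>'_def using scal_le[OF c(1)] by simp
    qed
  qed
  show ?thesis
  proof
    fix x assume x: "x \<in> D"
    show "\<psi> x \<le> rel_type_set p z \<psi> \<Phi> * \<Phi> x"
      unfolding \<sigma>_def[symmetric]
      by (rule final_step[OF sig0 Phi0[OF x] psi0[OF x]]) (use key x in blast)
  qed
qed

end
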